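(* Let $\sigma_0$ be uniform on $Q$ and $m(k)=\mathbf E[\sigma_0^k]$ for $k\in\{0,1,\dots\}$. Let $v_1,\dots,v_k\in\mathsf V$ be distinct and $r_1,\dots,r_k\in\{0,1,\dots\}$. Then $$\mathbf E\big[\sigma(v_1)^{r_1}\cdots\sigma(v_k)^{r_k}\big]=\sum_{\mathcal P}\mathbf P(\pi(\omega)=\mathcal P)\prod_{A\in\mathcal P}m\Big(\sum_{v_j\in A}r_j\Big),$$ where the sum runs over all partitions $\mathcal P$ of $\{v_1,\dots,v_k\}$ such that $\sum_{v_j\in A}r_j$ is even for every $A\in\mathcal P$. In particular $\mathbf E[\sigma(v_1)\sigma(v_2)]=m(2)\,\mathbf P(v_1\leftrightarrow v_2)$, where $\{v_1\leftrightarrow v_2\}$ is the event that $v_1$ and $v_2$ lie in the same cluster of $\omega$.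
   Context: Let $M$ be a compact orientable surface without boundary, or the plane. Let $\mathsf G=(\mathsf V,\mathsf E)$ be a finite connected graph embedded in $M$ with all faces topological discs, and $\mathsf G^*=(\mathsf U,\mathsf E^* )$ its embedded dual ($\mathsf U$ = faces of $\mathsf G$); $e^*$ is the dual edge crossing $e$, $\xi^*=\{e^*:e\in\xi\}$. Fix integers $q,q'\ge1$, finite $Q\subset\mathbb R$, $Q'\subset\mathbb C$ with $Q=-Q$, $Q'=-Q'$, $|Q|=q$, $|Q'|=q'$, and $a,b\in(0,1]$. For $\sigma:\mathsf V\to Q$, $\eta(\sigma)\subseteq\mathsf E^*$ is the set of $e^*$ whose primal $e$ has endpoints with different $\sigma$-values; for $\sigma':\mathsf U\to Q'$, $\eta(\sigma')\subseteq\mathsf E$ is the set of $e$ whose dual $e^*$ has endpoints with different $\sigma'$-values. $\mathbf P(\sigma,\sigma')\propto a^{|\eta(\sigma')|}b^{|\eta(\sigma)|}$ on $\Sigma=\{(\sigma,\sigma'):\eta(\sigma)^*\cap\eta(\sigma')=\emptyset\}$. Percolation: given $(\sigma,\sigma')$, every edge of $\eta(\sigma')$ and every dual edge of $\eta(\sigma)$ is open; for each pair $(e,e^* )$ with $e\notin\eta(\sigma')$, $e^*\notin\eta(\sigma)$, independently: if $a+b\le1$, ($e$ open, $e^*$ closed) w.p. $a$, ($e$ closed, $e^*$ open) w.p. $b$, both open w.p. $1-a-b$; if $a+b\ge1$, ($e$ open, $e^*$ closed) w.p. $1-b$, ($e$ closed, $e^*$ open) w.p. $1-a$, both closed w.p.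 $a+b-1$. $\omega$ is the set of open primal edges; $\mathbf P,\mathbf E$ refer to the joint law. Clusters of $\omega$ are the connected components of $(\mathsf V,\omega)$, and $\pi(\omega)$ is the partition of $\{v_1,\dots,v_k\}$ induced by the clusters of $\omega$. *)

theory Defs
  imports Complex_Main "HOL-Library.FuncSet" "HOL-Library.Disjoint_Sets"
begin

(* A cellularly embedded connected graph on a compact orientable surface is encoded
   (equivalently, by the Heffter-Edmonds-Ringel rotation principle) by a combinatorial map:
   a finite set D of darts (half-edges), a fixed-point-free involution alpha (the two darts
   of an edge) and a permutation phi (rotation of darts around a vertex).
   The dual edge e* of the edge {d, alpha d} joins the faces of d and alpha d; we index
   dual edges by their primal edge. *)

definition orb :: "('d \<Rightarrow> 'd) \<Rightarrow> 'd \<Rightarrow> 'd set" where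
  "orb f d = range (\<lambda>n. (f ^^ n) d)"

definition verts :: "'d set \<Rightarrow> ('d \<Rightarrow> 'd) \<Rightarrow> 'd set set" where
  "verts D \<phi> = orb \<phi> ` D"

definition faces :: "'d set \<Rightarrow> ('d \<Rightarrow> 'd) \<Rightarrow> ('d \<Rightarrow> 'd) \<Rightarrow> 'd set set" where
  "faces D \<alpha> \<phi> = orb (\<phi> \<circ> \<alpha>) ` D"

definition edges :: "'d set \<Rightarrow> ('d \<Rightarrow> 'd) \<Rightarrow> 'd set set" where
  "edges D \<alpha> = (\<lambda>d. {d, \<alpha> d}) ` D"

definition comb_map :: "'d set \<Rightarrow> ('d \<Rightarrow> 'd) \<Rightarrow> ('d \<Rightarrow> 'd) \<Rightarrow> bool" where
  "comb_map D \<alpha> \<phi> \<longleftrightarrow> finite D \<and> D \<noteq> {} \<and> bij_betw \<alpha> D D \<and> bij_betw \<phi> D D \<and>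
     (\<forall>d\<in>D. \<alpha> (\<alpha> d) = d \<and> \<alpha> d \<noteq> d) \<and>
     (\<forall>d\<in>D. \<forall>d'\<in>D. (d, d') \<in> ({(x, \<alpha> x) | x. x \<in> D} \<union> {(x, \<phi> x) | x. x \<in> D})\<^sup>*)"

definition eta_spin :: "'d set \<Rightarrow> ('d \<Rightarrow> 'd) \<Rightarrow> ('d \<Rightarrow> 'd) \<Rightarrow> ('d set \<Rightarrow> real) \<Rightarrow> 'd set set" where
  "eta_spin D \<alpha> \<phi> \<sigma> = {{d, \<alpha> d} | d. d \<in> D \<and> \<sigma> (orb \<phi> d) \<noteq> \<sigma> (orb \<phi> (\<alpha> d))}"

definition eta_dual :: "'d set \<Rightarrow> ('d \<Rightarrow> 'd) \<Rightarrow> ('d \<Rightarrow> 'd) \<Rightarrow> ('d set \<Rightarrow> complex) \<Rightarrow> 'd set set" where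
  "eta_dual D \<alpha> \<phi> \<tau> = {{d, \<alpha> d} | d. d \<in> D \<and> \<tau> (orb (\<phi> \<circ> \<alpha>) d) \<noteq> \<tau> (orb (\<phi> \<circ> \<alpha>) (\<alpha> d))}"

definition spin_weight :: "'d set \<Rightarrow> ('d \<Rightarrow> 'd) \<Rightarrow> ('d \<Rightarrow> 'd) \<Rightarrow> real \<Rightarrow> real \<Rightarrow>
    ('d set \<Rightarrow> real) \<Rightarrow> ('d set \<Rightarrow> complex) \<Rightarrow> real" where
  "spin_weight D \<alpha> \<phi> a b \<sigma> \<tau> =
     (if eta_spin D \<alpha> \<phi> \<sigma> \<inter> eta_dual D \<alpha> \<phi> \<tau> = {}
      then a ^ card (eta_dual D \<alpha> \<phi> \<tau>) * b ^ card (eta_spin D \<alpha> \<phi> \<sigma>) else 0)"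

definition partition_fn :: "'d set \<Rightarrow> ('d \<Rightarrow> 'd) \<Rightarrow> ('d \<Rightarrow> 'd) \<Rightarrow> real set \<Rightarrow> complex set \<Rightarrow>
    real \<Rightarrow> real \<Rightarrow> real" where
  "partition_fn D \<alpha> \<phi> Q Q' a b =
     (\<Sum>\<sigma>\<in>PiE (verts D \<phi>) (\<lambda>_. Q). \<Sum>\<tau>\<in>PiE (faces D \<alpha> \<phi>) (\<lambda>_. Q'). spin_weight D \<alpha> \<phi> a b \<sigma> \<tau>)"

(* conditional probability of the state (e open = o, dual edge open = os) of an edge pair,
   given whether e \<in> eta(sigma') and whether the dual edge is in eta(sigma) *)
definition edge_kernel :: "real \<Rightarrow> real \<Rightarrow> bool \<Rightarrow> bool \<Rightarrow> bool \<Rightarrow> bool \<Rightarrow> real" where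
  "edge_kernel a b inD inS oe os =
     (if inD then (if oe \<and> \<not> os then 1 else 0)
      else if inS then (if \<not> oe \<and> os then 1 else 0)
      else if a + b \<le> 1 then
        (if oe \<and> \<not> os then a else if \<not> oe \<and> os then b else if oe \<and> os then 1 - a - b else 0)
      else
        (if oe \<and> \<not> os then 1 - b else if \<not> oe \<and> os then 1 - a else if \<not> oe \<and> \<not> os then a + b - 1 else 0))"

definition joint_prob :: "'d set \<Rightarrow> ('d \<Rightarrow> 'd) \<Rightarrow> ('d \<Rightarrow> 'd) \<Rightarrow> real set \<Rightarrow> complex set \<Rightarrow>
    real \<Rightarrow> real \<Rightarrow> ('d set \<Rightarrow> real) \<Rightarrow> ('d set \<Rightarrow> complex) \<Rightarrow> 'd set set \<Rightarrow> 'd set set \<Rightarrow> real" where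
  "joint_prob D \<alpha> \<phi> Q Q' a b \<sigma> \<tau> \<omega> \<omega>s =
     spin_weight D \<alpha> \<phi> a b \<sigma> \<tau> / partition_fn D \<alpha> \<phi> Q Q' a b *
     (\<Prod>e\<in>edges D \<alpha>. edge_kernel a b (e \<in> eta_dual D \<alpha> \<phi> \<tau>) (e \<in> eta_spin D \<alpha> \<phi> \<sigma>) (e \<in> \<omega>) (e \<in> \<omega>s))"

definition expect :: "'d set \<Rightarrow> ('d \<Rightarrow> 'd) \<Rightarrow> ('d \<Rightarrow> 'd) \<Rightarrow> real set \<Rightarrow> complex set \<Rightarrow>
    real \<Rightarrow> real \<Rightarrow> (('d set \<Rightarrow> real) \<Rightarrow> 'd set set \<Rightarrow> real) \<Rightarrow> real" where
  "expect D \<alpha> \<phi> Q Q' a b F =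
     (\<Sum>\<sigma>\<in>PiE (verts D \<phi>) (\<lambda>_. Q). \<Sum>\<tau>\<in>PiE (faces D \<alpha> \<phi>) (\<lambda>_. Q').
      \<Sum>\<omega>\<in>Pow (edges D \<alpha>). \<Sum>\<omega>s\<in>Pow (edges D \<alpha>).
        joint_prob D \<alpha> \<phi> Q Q' a b \<sigma> \<tau> \<omega> \<omega>s * F \<sigma> \<omega>)"

definition open_adj :: "'d set \<Rightarrow> ('d \<Rightarrow> 'd) \<Rightarrow> ('d \<Rightarrow> 'd) \<Rightarrow> 'd set set \<Rightarrow> ('d set \<times> 'd set) set" where
  "open_adj D \<alpha> \<phi> \<omega> = {(orb \<phi> d, orb \<phi> (\<alpha> d)) | d. d \<in> D \<and> {d, \<alpha> d} \<in> \<omega>}"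

definition connected_in :: "'d set \<Rightarrow> ('d \<Rightarrow> 'd) \<Rightarrow> ('d \<Rightarrow> 'd) \<Rightarrow> 'd set set \<Rightarrow> 'd set \<Rightarrow> 'd set \<Rightarrow> bool" where
  "connected_in D \<alpha> \<phi> \<omega> u v \<longleftrightarrow> (u, v) \<in> (open_adj D \<alpha> \<phi> \<omega>)\<^sup>*"

definition cluster_partition :: "'d set \<Rightarrow> ('d \<Rightarrow> 'd) \<Rightarrow> ('d \<Rightarrow> 'd) \<Rightarrow> 'd set set \<Rightarrow> 'd set set \<Rightarrow> 'd set set set" where
  "cluster_partition D \<alpha> \<phi> \<omega> S = (\<lambda>u. {v \<in> S. connected_in D \<alpha> \<phi> \<omega> u v}) ` S"

definition moment :: "real set \<Rightarrow> nat \<Rightarrow> real" where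
  "moment Q k = (\<Sum>x\<in>Q. x ^ k) / real (card Q)"

end

theory Submission imports Defs begin

lemma sum_Pow_prod:
  fixes g :: "'a \<Rightarrow> bool \<Rightarrow> 'b::comm_semiring_1"
  assumes "finite A"
  shows "(\<Sum>S\<in>Pow A. \<Prod>e\<in>A. g e (e \<in> S)) = (\<Prod>e\<in>A. g e True + g e False)"
proof -
  have "(\<Prod>e\<in>A. g e True + g e False) = (\<Sum>X\<in>Pow A. (\<Prod>x\<in>X. g x True) * (\<Prod>x\<in>A-X. g x False))"
    by (rule prod_add[OF assms])
  also have "\<dots> = (\<Sum>S\<in>Pow A. \<Prod>e\<in>A. g e (e \<in> S))"
  proof (rule sum.cong[OF refl])
    fix X assume X: "X \<in> Pow A"
    have "(\<Prod>e\<in>A. g e (e \<in> X)) = (\<Prod>e\<in>A. if e \<in> X then g e True else g e False)"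
      by (rule prod.cong) auto
    also have "\<dots> = (\<Prod>x\<in>A \<inter> {x. x \<in> X}. g x True) * (\<Prod>x\<in>A \<inter> - {x. x \<in> X}. g x False)"
      by (rule prod.If_cases[OF assms])
    also have "A \<inter> {x. x \<in> X} = X" using X by auto
    also have "A \<inter> - {x. x \<in> X} = A - X" by auto
    finally show "(\<Prod>x\<in>X. g x True) * (\<Prod>x\<in>A-X. g x False) = (\<Prod>e\<in>A. g e (e \<in> X))" by simp
  qed
  finally show ?thesis by simp
qed

lemma prod_if_zero:
  fixes X :: "'a \<Rightarrow> 'b::comm_semiring_1"
  assumes "finite A"
  shows "(\<Prod>e\<in>A. if P e then 0 else X e) = (if \<exists>e\<in>A. P e then 0 else prod X A)"
proof (cases "\<exists>e\<in>A. P e")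
  case True
  then obtain e where "e \<in> A" "P e" by blast
  then show ?thesis using assms by (auto intro!: prod_zero)
next
  case False
  then show ?thesis by (auto intro!: prod.cong)
qed

lemma moment_odd:
  assumes "finite Q" "uminus ` Q = Q" "odd n"
  shows "moment Q n = 0"
proof -
  have "(\<Sum>x\<in>Q. x ^ n) = (\<Sum>x\<in>uminus ` Q. x ^ n)" using assms by simp
  also have "\<dots> = (\<Sum>x\<in>Q. (- x) ^ n)" by (subst sum.reindex) (auto simp: inj_on_def)
  also have "\<dots> = - (\<Sum>x\<in>Q. x ^ n)" using assms by (simp add: sum_negf)
  finally have "(\<Sum>x\<in>Q. x ^ n) = 0" by simp
  then show ?thesis by (simp add: moment_def)
qed

lemma moment_0: "finite Q \<Longrightarrow> card Q \<ge> 1 \<Longrightarrow> moment Q 0 = 1"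
  by (cases "Q = {}") (auto simp: moment_def)

lemma sum_pow_moment: "finite Q \<Longrightarrow> (\<Sum>x\<in>Q. x ^ n) = real (card Q) * moment Q n"
  by (cases "Q = {}") (auto simp: moment_def)

lemma kernel_sum:
  assumes "0 < a" "a \<le> 1" "0 < b" "b \<le> 1"
  shows "(if dd \<and> s then 0 else (if dd then a else 1) * (if s then b else (1::real))) *
     (edge_kernel a b dd s oe True + edge_kernel a b dd s oe False) =
     (if oe \<and> s then 0 else (if oe then (if dd then a else 1 - b) else (if dd then 0 else b)))"
  by (cases dd; cases s; cases oe; simp add: edge_kernel_def)

locale cm =
  fixes D :: "'d set" and \<alpha> \<phi> :: "'d \<Rightarrow> 'd"
  assumes finD: "finite D" and alD: "\<And>d. d \<in> D \<Longrightarrow> \<alpha> d \<in> D"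
    and alal: "\<And>d. d \<in> D \<Longrightarrow> \<alpha> (\<alpha> d) = d"
begin

definition cls where "cls \<omega> u = {v \<in> verts D \<phi>. connected_in D \<alpha> \<phi> \<omega> u v}"
definition good where "good \<omega> \<sigma> \<longleftrightarrow> \<omega> \<inter> eta_spin D \<alpha> \<phi> \<sigma> = {}"
definition Cset where "Cset Q \<omega> = {\<sigma> \<in> PiE (verts D \<phi>) (\<lambda>_. Q). good \<omega> \<sigma>}"

lemma finV: "finite (verts D \<phi>)" using finD by (simp add: verts_def)
lemma finE: "finite (edges D \<alpha>)" using finD by (simp add: edges_def)
lemma finF: "finite (faces D \<alpha> \<phi>)" using finD by (simp add: faces_def)

lemma ES_sub: "eta_spin D \<alpha> \<phi> \<sigma> \<subseteq> edges D \<alpha>"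
  by (auto simp: eta_spin_def edges_def)
lemma ED_sub: "eta_dual D \<alpha> \<phi> \<tau> \<subseteq> edges D \<alpha>"
  by (auto simp: eta_dual_def edges_def)

lemma ES_iff:
  assumes "d \<in> D"
  shows "{d, \<alpha> d} \<in> eta_spin D \<alpha> \<phi> \<sigma> \<longleftrightarrow> \<sigma> (orb \<phi> d) \<noteq> \<sigma> (orb \<phi> (\<alpha> d))"
proof
  assume "{d, \<alpha> d} \<in> eta_spin D \<alpha> \<phi> \<sigma>"
  then obtain d' where d': "{d, \<alpha> d} = {d', \<alpha> d'}" "d' \<in> D"
     "\<sigma> (orb \<phi> d') \<noteq> \<sigma> (orb \<phi> (\<alpha> d'))"
    by (auto simp: eta_spin_def)
  then have "(d = d' \<and> \<alpha> d = \<alpha> d') \<or> (d = \<alpha> d' \<and> \<alpha> d = d')"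
    by (auto simp: doubleton_eq_iff)
  then show "\<sigma> (orb \<phi> d) \<noteq> \<sigma> (orb \<phi> (\<alpha> d))" using d' by metis
qed (use assms in \<open>auto simp: eta_spin_def\<close>)

lemma adj_V: "(x, y) \<in> open_adj D \<alpha> \<phi> \<omega> \<Longrightarrow> x \<in> verts D \<phi> \<and> y \<in> verts D \<phi>"
  by (auto simp: open_adj_def verts_def alD)

lemma adj_sym: "(x, y) \<in> open_adj D \<alpha> \<phi> \<omega> \<Longrightarrow> (y, x) \<in> open_adj D \<alpha> \<phi> \<omega>"
proof -
  assume "(x, y) \<in> open_adj D \<alpha> \<phi> \<omega>"
  then obtain d where d: "x = orb \<phi> d" "y = orb \<phi> (\<alpha> d)" "d \<in> D" "{d, \<alpha> d} \<in> \<omega>"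
    by (auto simp: open_adj_def)
  have "{\<alpha> d, \<alpha> (\<alpha> d)} \<in> \<omega>" using d alal[of d] by (simp add: insert_commute)
  then show "(y, x) \<in> open_adj D \<alpha> \<phi> \<omega>" using d alD alal unfolding open_adj_def by force
qed

lemma conn_refl: "connected_in D \<alpha> \<phi> \<omega> u u" by (simp add: connected_in_def)

lemma conn_sym: "connected_in D \<alpha> \<phi> \<omega> u v \<Longrightarrow> connected_in D \<alpha> \<phi> \<omega> v u"
  unfolding connected_in_def
proof (induction rule: rtrancl_induct)
  case (step y z)
  then show ?case using adj_sym by (meson converse_rtrancl_into_rtrancl)
qed simp

lemma conn_trans: "connected_in D \<alpha> \<phi> \<omega> u v \<Longrightarrow> connected_in D \<alpha> \<phi> \<omega> v w \<Longrightarrow> connected_in D \<alpha> \<phi> \<omega> u w"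
  unfolding connected_in_def by simp

lemma conn_V: "connected_in D \<alpha> \<phi> \<omega> u v \<Longrightarrow> u \<in> verts D \<phi> \<Longrightarrow> v \<in> verts D \<phi>"
  unfolding connected_in_def
  by (induction rule: rtrancl_induct) (auto dest: adj_V)

lemma good_const:
  assumes "good \<omega> \<sigma>" "connected_in D \<alpha> \<phi> \<omega> u v"
  shows "\<sigma> u = \<sigma> v"
  using assms(2) unfolding connected_in_def
proof (induction rule: rtrancl_induct)
  case (step y z)
  then obtain d where d: "y = orb \<phi> d" "z = orb \<phi> (\<alpha> d)" "d \<in> D" "{d, \<alpha> d} \<in> \<omega>"
    by (auto simp: open_adj_def)
  then have "{d, \<alpha> d} \<notin> eta_spin D \<alpha> \<phi> \<sigma>" using assms(1) by (auto simp: good_def)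
  then show ?case using ES_iff[OF d(3)] d step by simp
qed simp

lemma const_good:
  assumes "\<And>u v. u \<in> verts D \<phi> \<Longrightarrow> connected_in D \<alpha> \<phi> \<omega> u v \<Longrightarrow> \<sigma> u = \<sigma> v"
  shows "good \<omega> \<sigma>"
  unfolding good_def
proof (rule ccontr)
  assume "\<omega> \<inter> eta_spin D \<alpha> \<phi> \<sigma> \<noteq> {}"
  then obtain e where e: "e \<in> \<omega>" "e \<in> eta_spin D \<alpha> \<phi> \<sigma>" by blast
  then obtain d where d: "e = {d, \<alpha> d}" "d \<in> D" by (auto simp: eta_spin_def)
  have "(orb \<phi> d, orb \<phi> (\<alpha> d)) \<in> open_adj D \<alpha> \<phi> \<omega>" using d e by (auto simp: open_adj_def)
  then have "connected_in D \<alpha> \<phi> \<omega> (orb \<phi> d) (orb \<phi> (\<alpha> d))" by (simp add: connected_in_def)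
  moreover have "orb \<phi> d \<in> verts D \<phi>" using d by (simp add: verts_def)
  ultimately have "\<sigma> (orb \<phi> d) = \<sigma> (orb \<phi> (\<alpha> d))" using assms by blast
  then show False using e d ES_iff by simp
qed

lemma cls_eq: "u \<in> verts D \<phi> \<Longrightarrow> connected_in D \<alpha> \<phi> \<omega> u v \<Longrightarrow> cls \<omega> u = cls \<omega> v"
  unfolding cls_def using conn_sym conn_trans by blast

lemma in_cls: "u \<in> verts D \<phi> \<Longrightarrow> u \<in> cls \<omega> u"
  by (simp add: cls_def conn_refl)

lemma core:
  fixes k :: nat and r :: "nat \<Rightarrow> nat"
  assumes finQ: "finite Q" and vV: "v ` {..<k} \<subseteq> verts D \<phi>"
  shows "(\<Sum>\<sigma>\<in>Cset Q \<omega>. \<Prod>j<k. \<sigma> (v j) ^ r j) =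
     real (card (Cset Q \<omega>)) * (\<Prod>c\<in>cls \<omega> ` verts D \<phi>. moment Q (\<Sum>j\<in>{j. j < k \<and> cls \<omega> (v j) = c}. r j))"
proof -
  let ?V = "verts D \<phi>"
  let ?K = "cls \<omega> ` ?V"
  define \<Phi> where "\<Phi> f = restrict (\<lambda>u. f (cls \<omega> u)) ?V" for f :: "'d set set \<Rightarrow> real"
  have finK: "finite ?K" using finV by simp
  have inj: "inj_on \<Phi> (PiE ?K (\<lambda>_. Q))"
  proof (rule inj_onI)
    fix f g assume f: "f \<in> PiE ?K (\<lambda>_. Q)" and g: "g \<in> PiE ?K (\<lambda>_. Q)" and eq: "\<Phi> f = \<Phi> g"
    show "f = g"
    proof
      fix c show "f c = g c"
      proof (cases "c \<in> ?K")
        case True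
        then obtain u where u: "u \<in> ?V" "c = cls \<omega> u" by blast
        from eq have "\<Phi> f u = \<Phi> g u" by (rule fun_cong)
        then have "f (cls \<omega> u) = g (cls \<omega> u)" using u(1) unfolding \<Phi>_def by simp
        then show ?thesis using u(2) by simp
      next
        case False
        show ?thesis using PiE_arb[OF f False] PiE_arb[OF g False] by simp
      qed
    qed
  qed
  have img: "\<Phi> ` PiE ?K (\<lambda>_. Q) = Cset Q \<omega>"
  proof
    show "\<Phi> ` PiE ?K (\<lambda>_. Q) \<subseteq> Cset Q \<omega>"
    proof
      fix \<sigma> assume "\<sigma> \<in> \<Phi> ` PiE ?K (\<lambda>_. Q)"
      then obtain f where f: "f \<in> PiE ?K (\<lambda>_. Q)" "\<sigma> = \<Phi> f" by blast
      have "\<sigma> \<in> PiE ?V (\<lambda>_. Q)" using f by (auto simp: \<Phi>_def)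
      moreover have "good \<omega> \<sigma>"
      proof (rule const_good)
        fix u w assume "u \<in> ?V" "connected_in D \<alpha> \<phi> \<omega> u w"
        then have "w \<in> ?V" "cls \<omega> u = cls \<omega> w" using conn_V cls_eq by blast+
        then show "\<sigma> u = \<sigma> w" using f \<open>u \<in> ?V\<close> by (simp add: \<Phi>_def)
      qed
      ultimately show "\<sigma> \<in> Cset Q \<omega>" by (simp add: Cset_def)
    qed
  next
    show "Cset Q \<omega> \<subseteq> \<Phi> ` PiE ?K (\<lambda>_. Q)"
    proof
      fix \<sigma> assume s: "\<sigma> \<in> Cset Q \<omega>"
      then have sP: "\<sigma> \<in> PiE ?V (\<lambda>_. Q)" and sg: "good \<omega> \<sigma>" by (auto simp: Cset_def)
      define f where "f = restrict (\<lambda>c. \<sigma> (SOME w. w \<in> c)) ?K"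
      have key: "\<sigma> (SOME w. w \<in> cls \<omega> u) = \<sigma> u" if "u \<in> ?V" for u
      proof -
        have "(SOME w. w \<in> cls \<omega> u) \<in> cls \<omega> u" using in_cls[OF that] by (rule someI)
        then have "connected_in D \<alpha> \<phi> \<omega> u (SOME w. w \<in> cls \<omega> u)" by (simp add: cls_def)
        then show ?thesis by (rule good_const[OF sg, symmetric])
      qed
      have "f \<in> PiE ?K (\<lambda>_. Q)"
      proof (rule PiE_I)
        fix c assume "c \<in> ?K"
        then obtain u where u: "u \<in> ?V" "c = cls \<omega> u" by blast
        have "f c = \<sigma> u" using u key[OF u(1)] by (simp add: f_def)
        then show "f c \<in> Q" using PiE_mem[OF sP u(1)] by simp
      next
        fix c assume "c \<notin> ?K" then show "f c = undefined" by (simp add: f_def)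
      qed
      moreover have "\<Phi> f = \<sigma>"
      proof
        fix u show "\<Phi> f u = \<sigma> u"
        proof (cases "u \<in> ?V")
          case True
          then have "\<Phi> f u = f (cls \<omega> u)" by (simp add: \<Phi>_def)
          also have "\<dots> = \<sigma> (SOME w. w \<in> cls \<omega> u)" using True by (simp add: f_def)
          also have "\<dots> = \<sigma> u" by (rule key[OF True])
          finally show ?thesis .
        next
          case False
          then show ?thesis using PiE_arb[OF sP False] by (simp add: \<Phi>_def)
        qed
      qed
      ultimately show "\<sigma> \<in> \<Phi> ` PiE ?K (\<lambda>_. Q)" by blast
    qed
  qed
  have cardC: "card (Cset Q \<omega>) = card Q ^ card ?K"
    using card_image[OF inj] img finK by (simp add: card_PiE)
  define R where "R c = (\<Sum>j\<in>{j. j < k \<and> cls \<omega> (v j) = c}. r j)" for c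
  have prodf: "(\<Prod>j<k. \<Phi> f (v j) ^ r j) = (\<Prod>c\<in>?K. f c ^ R c)" for f
  proof -
    have "(\<Prod>j<k. \<Phi> f (v j) ^ r j) = (\<Prod>j<k. f (cls \<omega> (v j)) ^ r j)"
      using vV by (intro prod.cong) (auto simp: \<Phi>_def)
    also have "\<dots> = (\<Prod>c\<in>?K. \<Prod>j\<in>{j. j \<in> {..<k} \<and> cls \<omega> (v j) = c}. f (cls \<omega> (v j)) ^ r j)"
      by (rule prod.group[where S="{..<k}" and T="?K" and g="\<lambda>j. cls \<omega> (v j)" and h="\<lambda>j. f (cls \<omega> (v j)) ^ r j", symmetric]) (use vV finK in auto)
    also have "\<dots> = (\<Prod>c\<in>?K. f c ^ R c)"
      unfolding R_def power_sum by (intro prod.cong refl) auto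
    finally show ?thesis .
  qed
  have "(\<Sum>\<sigma>\<in>Cset Q \<omega>. \<Prod>j<k. \<sigma> (v j) ^ r j) = (\<Sum>f\<in>PiE ?K (\<lambda>_. Q). \<Prod>j<k. \<Phi> f (v j) ^ r j)"
    by (subst img[symmetric], subst sum.reindex[OF inj]) simp
  also have "\<dots> = (\<Sum>f\<in>PiE ?K (\<lambda>_. Q). \<Prod>c\<in>?K. f c ^ R c)" by (simp add: prodf)
  also have "\<dots> = (\<Prod>c\<in>?K. \<Sum>x\<in>Q. x ^ R c)"
    by (rule prod_sum_PiE[symmetric]) (use finK finQ in auto)
  also have "\<dots> = (\<Prod>c\<in>?K. real (card Q) * moment Q (R c))"
    using finQ by (simp add: sum_pow_moment)
  also have "\<dots> = real (card (Cset Q \<omega>)) * (\<Prod>c\<in>?K. moment Q (R c))"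
    by (simp add: prod.distrib cardC)
  finally show ?thesis by (simp add: R_def)
qed

end

definition cw :: "real \<Rightarrow> real \<Rightarrow> bool \<Rightarrow> bool \<Rightarrow> real" where
  "cw a b dd s = (if dd \<and> s then 0 else (if dd then a else 1) * (if s then b else 1))"
definition kk :: "real \<Rightarrow> real \<Rightarrow> bool \<Rightarrow> bool \<Rightarrow> real" where
  "kk a b dd oe = (if oe then (if dd then a else 1 - b) else (if dd then 0 else b))"

lemma (in cm) sw_prod:
  "spin_weight D \<alpha> \<phi> a b \<sigma> \<tau> =
     (\<Prod>e\<in>edges D \<alpha>. cw a b (e \<in> eta_dual D \<alpha> \<phi> \<tau>) (e \<in> eta_spin D \<alpha> \<phi> \<sigma>))"
proof -
  let ?E = "edges D \<alpha>" and ?ED = "eta_dual D \<alpha> \<phi> \<tau>" and ?ES = "eta_spin D \<alpha> \<phi> \<sigma>"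
  have "(\<Prod>e\<in>?E. cw a b (e \<in> ?ED) (e \<in> ?ES)) =
    (\<Prod>e\<in>?E. (if e \<in> ?ED \<and> e \<in> ?ES then 0 else 1) * ((if e \<in> ?ED then a else 1) * (if e \<in> ?ES then b else 1)))"
    by (intro prod.cong) (auto simp: cw_def)
  also have "\<dots> = (\<Prod>e\<in>?E. if e \<in> ?ED \<and> e \<in> ?ES then 0 else 1) *
     ((\<Prod>e\<in>?E. if e \<in> ?ED then a else 1) * (\<Prod>e\<in>?E. if e \<in> ?ES then b else 1))"
    by (simp add: prod.distrib)
  also have "(\<Prod>e\<in>?E. if e \<in> ?ED then a else 1) = a ^ card ?ED"
  proof -
    have "(\<Prod>e\<in>?E. if e \<in> ?ED then a else 1) = (\<Prod>e\<in>?E \<inter> {e. e \<in> ?ED}. a) * (\<Prod>e\<in>?E \<inter> - {e. e \<in> ?ED}. 1)"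
      by (rule prod.If_cases[OF finE])
    also have "?E \<inter> {e. e \<in> ?ED} = ?ED" using ED_sub by blast
    finally show ?thesis by simp
  qed
  also have "(\<Prod>e\<in>?E. if e \<in> ?ES then b else 1) = b ^ card ?ES"
  proof -
    have "(\<Prod>e\<in>?E. if e \<in> ?ES then b else 1) = (\<Prod>e\<in>?E \<inter> {e. e \<in> ?ES}. b) * (\<Prod>e\<in>?E \<inter> - {e. e \<in> ?ES}. 1)"
      by (rule prod.If_cases[OF finE])
    also have "?E \<inter> {e. e \<in> ?ES} = ?ES" using ES_sub by blast
    finally show ?thesis by simp
  qed
  also have "(\<Prod>e\<in>?E. if e \<in> ?ED \<and> e \<in> ?ES then 0 else 1) = (if ?ES \<inter> ?ED = {} then 1 else (0::real))"
    using prod_if_zero[OF finE, of "\<lambda>e. e \<in> ?ED \<and> e \<in> ?ES" "\<lambda>_. 1::real"] ES_sub by auto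
  finally show ?thesis by (simp add: spin_weight_def)
qed

lemma (in cm) marg:
  assumes ab: "0 < a" "a \<le> 1" "0 < b" "b \<le> 1" and om: "\<omega> \<in> Pow (edges D \<alpha>)"
  shows "(\<Sum>\<omega>s\<in>Pow (edges D \<alpha>). joint_prob D \<alpha> \<phi> Q Q' a b \<sigma> \<tau> \<omega> \<omega>s) =
    (if good \<omega> \<sigma> then (\<Prod>e\<in>edges D \<alpha>. kk a b (e \<in> eta_dual D \<alpha> \<phi> \<tau>) (e \<in> \<omega>)) / partition_fn D \<alpha> \<phi> Q Q' a b else 0)"
proof -
  let ?E = "edges D \<alpha>" and ?ED = "eta_dual D \<alpha> \<phi> \<tau>" and ?ES = "eta_spin D \<alpha> \<phi> \<sigma>"
  let ?Z = "partition_fn D \<alpha> \<phi> Q Q' a b"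
  have "(\<Sum>\<omega>s\<in>Pow ?E. joint_prob D \<alpha> \<phi> Q Q' a b \<sigma> \<tau> \<omega> \<omega>s) =
     spin_weight D \<alpha> \<phi> a b \<sigma> \<tau> / ?Z * (\<Sum>\<omega>s\<in>Pow ?E. \<Prod>e\<in>?E. edge_kernel a b (e \<in> ?ED) (e \<in> ?ES) (e \<in> \<omega>) (e \<in> \<omega>s))"
    by (simp add: joint_prob_def sum_distrib_left)
  also have "(\<Sum>\<omega>s\<in>Pow ?E. \<Prod>e\<in>?E. edge_kernel a b (e \<in> ?ED) (e \<in> ?ES) (e \<in> \<omega>) (e \<in> \<omega>s)) =
     (\<Prod>e\<in>?E. edge_kernel a b (e \<in> ?ED) (e \<in> ?ES) (e \<in> \<omega>) True + edge_kernel a b (e \<in> ?ED) (e \<in> ?ES) (e \<in> \<omega>) False)"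
    by (rule sum_Pow_prod[OF finE])
  also have "spin_weight D \<alpha> \<phi> a b \<sigma> \<tau> / ?Z * \<dots> =
     (\<Prod>e\<in>?E. cw a b (e \<in> ?ED) (e \<in> ?ES) * (edge_kernel a b (e \<in> ?ED) (e \<in> ?ES) (e \<in> \<omega>) True + edge_kernel a b (e \<in> ?ED) (e \<in> ?ES) (e \<in> \<omega>) False)) / ?Z"
    by (simp add: sw_prod prod.distrib)
  also have "(\<Prod>e\<in>?E. cw a b (e \<in> ?ED) (e \<in> ?ES) * (edge_kernel a b (e \<in> ?ED) (e \<in> ?ES) (e \<in> \<omega>) True + edge_kernel a b (e \<in> ?ED) (e \<in> ?ES) (e \<in> \<omega>) False))
     = (\<Prod>e\<in>?E. if e \<in> \<omega> \<and> e \<in> ?ES then 0 else kk a b (e \<in> ?ED) (e \<in> \<omega>))"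
    unfolding cw_def kk_def by (rule prod.cong[OF refl], rule kernel_sum[OF ab])
  also have "\<dots> = (if \<exists>e\<in>?E. e \<in> \<omega> \<and> e \<in> ?ES then 0 else (\<Prod>e\<in>?E. kk a b (e \<in> ?ED) (e \<in> \<omega>)))"
    by (rule prod_if_zero[OF finE])
  also have "(\<exists>e\<in>?E. e \<in> \<omega> \<and> e \<in> ?ES) \<longleftrightarrow> \<not> good \<omega> \<sigma>"
    using ES_sub by (auto simp: good_def)
  finally show ?thesis by simp
qed

lemma (in cm) expect_eq:
  assumes ab: "0 < a" "a \<le> 1" "0 < b" "b \<le> 1" and finQ: "finite Q"
  shows "expect D \<alpha> \<phi> Q Q' a b F =
    (\<Sum>\<omega>\<in>Pow (edges D \<alpha>). (\<Sum>\<tau>\<in>PiE (faces D \<alpha> \<phi>) (\<lambda>_. Q').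
        (\<Prod>e\<in>edges D \<alpha>. kk a b (e \<in> eta_dual D \<alpha> \<phi> \<tau>) (e \<in> \<omega>)) / partition_fn D \<alpha> \<phi> Q Q' a b)
      * (\<Sum>\<sigma>\<in>Cset Q \<omega>. F \<sigma> \<omega>))"
proof -
  let ?E = "edges D \<alpha>" and ?VS = "PiE (verts D \<phi>) (\<lambda>_. Q)" and ?FS = "PiE (faces D \<alpha> \<phi>) (\<lambda>_. Q')"
  define P where "P \<tau> \<omega> = (\<Prod>e\<in>edges D \<alpha>. kk a b (e \<in> eta_dual D \<alpha> \<phi> \<tau>) (e \<in> \<omega>)) / partition_fn D \<alpha> \<phi> Q Q' a b" for \<tau> \<omega>
  have "expect D \<alpha> \<phi> Q Q' a b F = (\<Sum>\<sigma>\<in>?VS. \<Sum>\<tau>\<in>?FS. \<Sum>\<omega>\<in>Pow ?E.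
      (\<Sum>\<omega>s\<in>Pow ?E. joint_prob D \<alpha> \<phi> Q Q' a b \<sigma> \<tau> \<omega> \<omega>s) * F \<sigma> \<omega>)"
    by (simp add: expect_def sum_distrib_right)
  also have "\<dots> = (\<Sum>\<sigma>\<in>?VS. \<Sum>\<tau>\<in>?FS. \<Sum>\<omega>\<in>Pow ?E. (if good \<omega> \<sigma> then P \<tau> \<omega> * F \<sigma> \<omega> else 0))"
    by (intro sum.cong refl) (simp add: marg[OF ab] P_def)
  also have "\<dots> = (\<Sum>\<omega>\<in>Pow ?E. \<Sum>\<tau>\<in>?FS. \<Sum>\<sigma>\<in>?VS. (if good \<omega> \<sigma> then P \<tau> \<omega> * F \<sigma> \<omega> else 0))"
    by (subst sum.swap, subst (2) sum.swap, subst sum.swap) (rule refl)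
  also have "\<dots> = (\<Sum>\<omega>\<in>Pow ?E. \<Sum>\<tau>\<in>?FS. P \<tau> \<omega> * (\<Sum>\<sigma>\<in>Cset Q \<omega>. F \<sigma> \<omega>))"
  proof (intro sum.cong refl)
    fix \<omega> \<tau>
    have "(\<Sum>\<sigma>\<in>?VS. (if good \<omega> \<sigma> then P \<tau> \<omega> * F \<sigma> \<omega> else 0)) = (\<Sum>\<sigma>\<in>Cset Q \<omega>. P \<tau> \<omega> * F \<sigma> \<omega>)"
      unfolding Cset_def by (rule sum.inter_filter[symmetric]) (simp add: finite_PiE finV finQ)
    then show "(\<Sum>\<sigma>\<in>?VS. (if good \<omega> \<sigma> then P \<tau> \<omega> * F \<sigma> \<omega> else 0)) = P \<tau> \<omega> * (\<Sum>\<sigma>\<in>Cset Q \<omega>. F \<sigma> \<omega>)"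
      by (simp add: sum_distrib_left)
  qed
  also have "\<dots> = (\<Sum>\<omega>\<in>Pow ?E. (\<Sum>\<tau>\<in>?FS. P \<tau> \<omega>) * (\<Sum>\<sigma>\<in>Cset Q \<omega>. F \<sigma> \<omega>))"
    by (simp add: sum_distrib_right)
  finally show ?thesis by (simp add: P_def)
qed

lemma (in cm) cp_eq:
  assumes "S \<subseteq> verts D \<phi>"
  shows "cluster_partition D \<alpha> \<phi> \<omega> S = (\<lambda>c. c \<inter> S) ` (cls \<omega> ` S)"
proof -
  have "(\<lambda>u. {w \<in> S. connected_in D \<alpha> \<phi> \<omega> u w}) u = (\<lambda>c. c \<inter> S) (cls \<omega> u)" if "u \<in> S" for u
    using assms by (auto simp: cls_def)
  then show ?thesis unfolding cluster_partition_def image_image by (rule image_cong[OF refl])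
qed

lemma (in cm) cp_partition:
  assumes "S \<subseteq> verts D \<phi>"
  shows "partition_on S (cluster_partition D \<alpha> \<phi> \<omega> S)"
  unfolding partition_on_def
proof (intro conjI)
  show "\<Union> (cluster_partition D \<alpha> \<phi> \<omega> S) = S"
    by (auto simp: cluster_partition_def conn_refl)
  show "{} \<notin> cluster_partition D \<alpha> \<phi> \<omega> S"
    by (auto simp: cluster_partition_def conn_refl)
  show "disjoint (cluster_partition D \<alpha> \<phi> \<omega> S)"
  proof (rule disjointI)
    fix A B assume A: "A \<in> cluster_partition D \<alpha> \<phi> \<omega> S" and B: "B \<in> cluster_partition D \<alpha> \<phi> \<omega> S" and ne: "A \<noteq> B"
    obtain u where u: "A = {w \<in> S. connected_in D \<alpha> \<phi> \<omega> u w}" using A by (auto simp: cluster_partition_def)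
    obtain u' where u': "B = {w \<in> S. connected_in D \<alpha> \<phi> \<omega> u' w}" using B by (auto simp: cluster_partition_def)
    show "A \<inter> B = {}"
    proof (rule ccontr)
      assume "A \<inter> B \<noteq> {}"
      then obtain x where "connected_in D \<alpha> \<phi> \<omega> u x" "connected_in D \<alpha> \<phi> \<omega> u' x" using u u' by auto
      then have "connected_in D \<alpha> \<phi> \<omega> u u'" using conn_sym conn_trans by blast
      then have "A = B" unfolding u u' using conn_sym conn_trans by blast
      then show False using ne by simp
    qed
  qed
qed

lemma (in cm) prodK:
  fixes k :: nat and r :: "nat \<Rightarrow> nat"
  assumes finQ: "finite Q" and cQ: "card Q \<ge> 1" and vV: "v ` {..<k} \<subseteq> verts D \<phi>"
  shows "(\<Prod>c\<in>cls \<omega> ` verts D \<phi>. moment Q (\<Sum>j\<in>{j. j < k \<and> cls \<omega> (v j) = c}. r j)) =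
     (\<Prod>A\<in>cluster_partition D \<alpha> \<phi> \<omega> (v ` {..<k}). moment Q (\<Sum>j\<in>{j. j < k \<and> v j \<in> A}. r j))"
proof -
  let ?S = "v ` {..<k}"
  let ?g = "\<lambda>c. moment Q (\<Sum>j\<in>{j. j < k \<and> cls \<omega> (v j) = c}. r j)"
  have sub: "cls \<omega> ` ?S \<subseteq> cls \<omega> ` verts D \<phi>" using vV by blast
  have "(\<Prod>c\<in>cls \<omega> ` verts D \<phi>. ?g c) = (\<Prod>c\<in>cls \<omega> ` ?S. ?g c)"
  proof (rule prod.mono_neutral_right[OF _ sub])
    show "finite (cls \<omega> ` verts D \<phi>)" using finV by simp
    show "\<forall>c\<in>cls \<omega> ` verts D \<phi> - cls \<omega> ` ?S. ?g c = 1"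
    proof
      fix c assume c: "c \<in> cls \<omega> ` verts D \<phi> - cls \<omega> ` ?S"
      then have E: "{j. j < k \<and> cls \<omega> (v j) = c} = {}" by auto
      show "?g c = 1" by (simp only: E sum.empty moment_0[OF finQ cQ])
    qed
  qed
  also have "\<dots> = (\<Prod>A\<in>(\<lambda>c. c \<inter> ?S) ` (cls \<omega> ` ?S). moment Q (\<Sum>j\<in>{j. j < k \<and> v j \<in> A}. r j))"
  proof -
    have inj: "inj_on (\<lambda>c. c \<inter> ?S) (cls \<omega> ` ?S)"
    proof (rule inj_onI)
      fix c c' assume c: "c \<in> cls \<omega> ` ?S" and c': "c' \<in> cls \<omega> ` ?S" and eq: "c \<inter> ?S = c' \<inter> ?S"
      obtain u where u: "u \<in> ?S" "c = cls \<omega> u" using c by blast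
      obtain u' where u': "u' \<in> ?S" "c' = cls \<omega> u'" using c' by blast
      have "u' \<in> c' \<inter> ?S" using u' vV in_cls by blast
      then have "u' \<in> cls \<omega> u" using eq u by blast
      then have "connected_in D \<alpha> \<phi> \<omega> u u'" by (simp add: cls_def)
      moreover have "u \<in> verts D \<phi>" using u vV by blast
      ultimately show "c = c'" using u u' cls_eq by metis
    qed
    have "(\<Prod>A\<in>(\<lambda>c. c \<inter> ?S) ` (cls \<omega> ` ?S). moment Q (\<Sum>j\<in>{j. j < k \<and> v j \<in> A}. r j)) =
        (\<Prod>c\<in>cls \<omega> ` ?S. moment Q (\<Sum>j\<in>{j. j < k \<and> v j \<in> c \<inter> ?S}. r j))"
      by (subst prod.reindex[OF inj]) simp
    also have "\<dots> = (\<Prod>c\<in>cls \<omega> ` ?S. ?g c)"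
    proof (rule prod.cong[OF refl])
      fix c assume "c \<in> cls \<omega> ` ?S"
      then obtain u where u: "u \<in> ?S" "c = cls \<omega> u" by blast
      have uV: "u \<in> verts D \<phi>" using u vV by blast
      have "{j. j < k \<and> v j \<in> c \<inter> ?S} = {j. j < k \<and> cls \<omega> (v j) = c}"
      proof (intro Collect_cong conj_cong refl)
        fix j assume j: "j < k"
        have vj: "v j \<in> verts D \<phi>" using j vV by blast
        show "v j \<in> c \<inter> ?S \<longleftrightarrow> cls \<omega> (v j) = c"
        proof
          assume "v j \<in> c \<inter> ?S"
          then have "connected_in D \<alpha> \<phi> \<omega> u (v j)" using u by (simp add: cls_def)
          then show "cls \<omega> (v j) = c" using cls_eq[OF uV] u by simp
        next
          assume "cls \<omega> (v j) = c"
          then show "v j \<in> c \<inter> ?S" using in_cls[OF vj] j by blast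
        qed
      qed
      then show "moment Q (\<Sum>j\<in>{j. j < k \<and> v j \<in> c \<inter> ?S}. r j) = ?g c" by simp
    qed
    finally show ?thesis by simp
  qed
  also have "(\<lambda>c. c \<inter> ?S) ` (cls \<omega> ` ?S) = cluster_partition D \<alpha> \<phi> \<omega> ?S"
    using cp_eq[OF vV] by simp
  finally show ?thesis .
qed

lemma (in cm) part1:
  fixes k :: nat and r :: "nat \<Rightarrow> nat" and v :: "nat \<Rightarrow> 'd set"
  assumes ab: "0 < a" "a \<le> 1" "0 < b" "b \<le> 1" and finQ: "finite Q" and cQ: "card Q \<ge> 1"
    and symQ: "uminus ` Q = Q" and vV: "v ` {..<k} \<subseteq> verts D \<phi>"
  shows "expect D \<alpha> \<phi> Q Q' a b (\<lambda>\<sigma> \<omega>. \<Prod>j<k. \<sigma> (v j) ^ r j) =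
            (\<Sum>P\<in>{P. partition_on (v ` {..<k}) P \<and>
                       (\<forall>A\<in>P. even (\<Sum>j\<in>{j. j < k \<and> v j \<in> A}. r j))}.
               expect D \<alpha> \<phi> Q Q' a b
                 (\<lambda>\<sigma> \<omega>. if cluster_partition D \<alpha> \<phi> \<omega> (v ` {..<k}) = P then 1 else 0) *
               (\<Prod>A\<in>P. moment Q (\<Sum>j\<in>{j. j < k \<and> v j \<in> A}. r j)))"
proof -
  let ?S = "v ` {..<k}"
  let ?G = "{P. partition_on ?S P \<and> (\<forall>A\<in>P. even (\<Sum>j\<in>{j. j < k \<and> v j \<in> A}. r j))}"
  let ?E = "edges D \<alpha>"
  define H where "H \<omega> = (\<Sum>\<tau>\<in>PiE (faces D \<alpha> \<phi>) (\<lambda>_. Q').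
        (\<Prod>e\<in>edges D \<alpha>. kk a b (e \<in> eta_dual D \<alpha> \<phi> \<tau>) (e \<in> \<omega>)) / partition_fn D \<alpha> \<phi> Q Q' a b)" for \<omega>
  have EE: "expect D \<alpha> \<phi> Q Q' a b F = (\<Sum>\<omega>\<in>Pow ?E. H \<omega> * (\<Sum>\<sigma>\<in>Cset Q \<omega>. F \<sigma> \<omega>))" for F
    using expect_eq[OF ab finQ] by (simp add: H_def)
  define X where "X P = (\<Prod>A\<in>P. moment Q (\<Sum>j\<in>{j. j < k \<and> v j \<in> A}. r j))" for P
  define \<pi> where "\<pi> \<omega> = cluster_partition D \<alpha> \<phi> \<omega> ?S" for \<omega>
  define C where "C \<omega> = real (card (Cset Q \<omega>))" for \<omega>
  have finG: "finite ?G"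
  proof (rule finite_subset)
    show "?G \<subseteq> Pow (Pow ?S)" by (auto simp: partition_on_def)
  qed simp
  have delta: "(\<Sum>P\<in>?G. if \<pi> \<omega> = P then X P else 0) = X (\<pi> \<omega>)" for \<omega>
  proof -
    have "(\<Sum>P\<in>?G. if \<pi> \<omega> = P then X P else 0) = (if \<pi> \<omega> \<in> ?G then X (\<pi> \<omega>) else 0)"
      using finG by (rule sum.delta')
    also have "\<dots> = X (\<pi> \<omega>)"
    proof (cases "\<pi> \<omega> \<in> ?G")
      case False
      have "partition_on ?S (\<pi> \<omega>)" unfolding \<pi>_def by (rule cp_partition[OF vV])
      with False obtain A where A: "A \<in> \<pi> \<omega>" "odd (\<Sum>j\<in>{j. j < k \<and> v j \<in> A}. r j)" by auto
      have "finite (\<pi> \<omega>)" by (simp add: \<pi>_def cluster_partition_def)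
      moreover have "moment Q (\<Sum>j\<in>{j. j < k \<and> v j \<in> A}. r j) = 0"
        using moment_odd[OF finQ symQ A(2)] .
      ultimately have "X (\<pi> \<omega>) = 0" unfolding X_def using A(1) by (intro prod_zero) (auto intro!: bexI[of _ A])
      then show ?thesis using False by simp
    qed simp
    finally show ?thesis .
  qed
  have "expect D \<alpha> \<phi> Q Q' a b (\<lambda>\<sigma> \<omega>. \<Prod>j<k. \<sigma> (v j) ^ r j) = (\<Sum>\<omega>\<in>Pow ?E. H \<omega> * (C \<omega> * X (\<pi> \<omega>)))"
    unfolding EE by (intro sum.cong refl) (simp add: core[OF finQ vV] prodK[OF finQ cQ vV] C_def X_def \<pi>_def)
  also have "\<dots> = (\<Sum>\<omega>\<in>Pow ?E. \<Sum>P\<in>?G. H \<omega> * (C \<omega> * (if \<pi> \<omega> = P then X P else 0)))"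
    by (simp add: delta sum_distrib_left[symmetric])
  also have "\<dots> = (\<Sum>P\<in>?G. \<Sum>\<omega>\<in>Pow ?E. H \<omega> * (C \<omega> * (if \<pi> \<omega> = P then X P else 0)))"
    by (rule sum.swap)
  also have "\<dots> = (\<Sum>P\<in>?G. expect D \<alpha> \<phi> Q Q' a b
                 (\<lambda>\<sigma> \<omega>. if cluster_partition D \<alpha> \<phi> \<omega> ?S = P then 1 else 0) * X P)"
  proof (rule sum.cong[OF refl])
    fix P
    show "(\<Sum>\<omega>\<in>Pow ?E. H \<omega> * (C \<omega> * (if \<pi> \<omega> = P then X P else 0))) =
       expect D \<alpha> \<phi> Q Q' a b (\<lambda>\<sigma> \<omega>. if cluster_partition D \<alpha> \<phi> \<omega> ?S = P then 1 else 0) * X P"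
      unfolding EE sum_distrib_right by (intro sum.cong refl) (simp add: C_def \<pi>_def)
  qed
  finally show ?thesis by (simp add: X_def)
qed

lemma sum_lt2: "(\<Sum>j\<in>{j. j < (2::nat) \<and> P j}. f j) = (if P 0 then f 0 else 0) + (if P 1 then f 1 else (0::nat))"
proof -
  have e: "{j. j < (2::nat) \<and> P j} = {x \<in> {..<2}. P x}" by auto
  have "sum f {x \<in> {..<2::nat}. P x} = (\<Sum>j<2. if P j then f j else 0)" by (rule sum.inter_filter) simp
  also have "\<dots> = (if P 0 then f 0 else 0) + (if P 1 then f 1 else 0)"
    by (simp add: eval_nat_numeral)
  finally show ?thesis unfolding e .
qed

lemma (in cm) part2:
  assumes ab: "0 < a" "a \<le> 1" "0 < b" "b \<le> 1" and finQ: "finite Q" and cQ: "card Q \<ge> 1"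
    and symQ: "uminus ` Q = Q" and v1: "v1 \<in> verts D \<phi>" and v2: "v2 \<in> verts D \<phi>"
  shows "expect D \<alpha> \<phi> Q Q' a b (\<lambda>\<sigma> \<omega>. \<sigma> v1 * \<sigma> v2) =
            moment Q 2 * expect D \<alpha> \<phi> Q Q' a b
                           (\<lambda>\<sigma> \<omega>. if connected_in D \<alpha> \<phi> \<omega> v1 v2 then 1 else 0)"
proof -
  let ?E = "edges D \<alpha>"
  define H where "H \<omega> = (\<Sum>\<tau>\<in>PiE (faces D \<alpha> \<phi>) (\<lambda>_. Q').
        (\<Prod>e\<in>edges D \<alpha>. kk a b (e \<in> eta_dual D \<alpha> \<phi> \<tau>) (e \<in> \<omega>)) / partition_fn D \<alpha> \<phi> Q Q' a b)" for \<omega>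
  have EE: "expect D \<alpha> \<phi> Q Q' a b F = (\<Sum>\<omega>\<in>Pow ?E. H \<omega> * (\<Sum>\<sigma>\<in>Cset Q \<omega>. F \<sigma> \<omega>))" for F
    using expect_eq[OF ab finQ] by (simp add: H_def)
  define v where "v j = (if j = 0 then v1 else v2)" for j :: nat
  have vV: "v ` {..<2} \<subseteq> verts D \<phi>" using v1 v2 by (auto simp: v_def)
  have inner: "(\<Sum>\<sigma>\<in>Cset Q \<omega>. \<sigma> v1 * \<sigma> v2) =
      real (card (Cset Q \<omega>)) * (if connected_in D \<alpha> \<phi> \<omega> v1 v2 then moment Q 2 else 0)" for \<omega>
  proof -
    have "(\<Sum>\<sigma>\<in>Cset Q \<omega>. \<sigma> v1 * \<sigma> v2) = (\<Sum>\<sigma>\<in>Cset Q \<omega>. \<Prod>j<2. \<sigma> (v j) ^ (\<lambda>_. 1::nat) j)"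
      by (simp add: eval_nat_numeral v_def)
    also have "\<dots> = real (card (Cset Q \<omega>)) * (\<Prod>c\<in>cls \<omega> ` verts D \<phi>. moment Q (\<Sum>j\<in>{j. j < 2 \<and> cls \<omega> (v j) = c}. (\<lambda>_. 1::nat) j))"
      by (rule core[OF finQ vV])
    also have "(\<Prod>c\<in>cls \<omega> ` verts D \<phi>. moment Q (\<Sum>j\<in>{j. j < 2 \<and> cls \<omega> (v j) = c}. (\<lambda>_. 1::nat) j)) =
       (\<Prod>c\<in>cls \<omega> ` verts D \<phi>. moment Q ((if cls \<omega> v1 = c then 1 else 0) + (if cls \<omega> v2 = c then 1 else 0)))"
      by (simp only: sum_lt2) (simp add: v_def)
    also have "\<dots> = (if connected_in D \<alpha> \<phi> \<omega> v1 v2 then moment Q 2 else 0)"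
    proof (cases "connected_in D \<alpha> \<phi> \<omega> v1 v2")
      case True
      then have eq: "cls \<omega> v2 = cls \<omega> v1" using cls_eq[OF v1] by simp
      have "(\<Prod>c\<in>cls \<omega> ` verts D \<phi>. moment Q ((if cls \<omega> v1 = c then 1 else 0) + (if cls \<omega> v2 = c then 1 else 0)))
        = (\<Prod>c\<in>cls \<omega> ` verts D \<phi>. if cls \<omega> v1 = c then moment Q 2 else 1)"
        by (intro prod.cong refl) (simp add: eq moment_0[OF finQ cQ] numeral_2_eq_2)
      also have "\<dots> = moment Q 2" using v1 finV by simp
      finally show ?thesis using True by simp
    next
      case False
      then have ne: "cls \<omega> v2 \<noteq> cls \<omega> v1" using in_cls[OF v2] by (auto simp: cls_def)
      have m1: "moment Q (Suc 0) = 0" using moment_odd[OF finQ symQ, of 1] by simp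
      have "(\<Prod>c\<in>cls \<omega> ` verts D \<phi>. moment Q ((if cls \<omega> v1 = c then 1 else 0) + (if cls \<omega> v2 = c then 1 else 0))) = 0"
        using v1 finV ne m1 by (intro prod_zero) (auto intro!: bexI[of _ "cls \<omega> v1"])
      then show ?thesis using False by simp
    qed
    finally show ?thesis .
  qed
  show ?thesis unfolding EE inner sum_distrib_left
    by (intro sum.cong refl) simp
qed

theorem proposition5p1:
  fixes D :: "'d set" and \<alpha> \<phi> :: "'d \<Rightarrow> 'd"
    and Q :: "real set" and Q' :: "complex set" and q q' :: nat and a b :: real
  assumes map: "comb_map D \<alpha> \<phi>"
    and Q: "finite Q" "card Q = q" "q \<ge> 1" "uminus ` Q = Q"
    and Q': "finite Q'" "card Q' = q'" "q' \<ge> 1" "uminus ` Q' = Q'"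
    and ab: "0 < a" "a \<le> 1" "0 < b" "b \<le> 1"
  shows "(\<forall>(k::nat) (v::nat \<Rightarrow> 'd set) (r::nat \<Rightarrow> nat).
            inj_on v {..<k} \<and> v ` {..<k} \<subseteq> verts D \<phi> \<longrightarrow>
            expect D \<alpha> \<phi> Q Q' a b (\<lambda>\<sigma> \<omega>. \<Prod>j<k. \<sigma> (v j) ^ r j) =
            (\<Sum>P\<in>{P. partition_on (v ` {..<k}) P \<and>
                       (\<forall>A\<in>P. even (\<Sum>j\<in>{j. j < k \<and> v j \<in> A}. r j))}.
               expect D \<alpha> \<phi> Q Q' a b
                 (\<lambda>\<sigma> \<omega>. if cluster_partition D \<alpha> \<phi> \<omega> (v ` {..<k}) = P then 1 else 0) *
               (\<Prod>A\<in>P. moment Q (\<Sum>j\<in>{j. j < k \<and> v j \<in> A}. r j))))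
         \<and>
         (\<forall>v1\<in>verts D \<phi>. \<forall>v2\<in>verts D \<phi>. v1 \<noteq> v2 \<longrightarrow>
            expect D \<alpha> \<phi> Q Q' a b (\<lambda>\<sigma> \<omega>. \<sigma> v1 * \<sigma> v2) =
            moment Q 2 * expect D \<alpha> \<phi> Q Q' a b
                           (\<lambda>\<sigma> \<omega>. if connected_in D \<alpha> \<phi> \<omega> v1 v2 then 1 else 0))"
proof -
  have fD: "finite D" and bj: "bij_betw \<alpha> D D" and inv: "\<And>d. d \<in> D \<Longrightarrow> \<alpha> (\<alpha> d) = d"
    using map by (auto simp: comb_map_def)
  interpret cm D \<alpha> \<phi>
  proof
    show "finite D" by (rule fD)
    show "\<And>d. d \<in> D \<Longrightarrow> \<alpha> d \<in> D" using bj by (auto simp: bij_betw_def)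
    show "\<And>d. d \<in> D \<Longrightarrow> \<alpha> (\<alpha> d) = d" by (rule inv)
  qed
  have cQ: "card Q \<ge> 1" using Q by simp
  show ?thesis
  proof (intro conjI allI impI ballI)
    fix k :: nat and v :: "nat \<Rightarrow> 'd set" and r :: "nat \<Rightarrow> nat"
    assume "inj_on v {..<k} \<and> v ` {..<k} \<subseteq> verts D \<phi>"
    then have vV: "v ` {..<k} \<subseteq> verts D \<phi>" by simp
    show "expect D \<alpha> \<phi> Q Q' a b (\<lambda>\<sigma> \<omega>. \<Prod>j<k. \<sigma> (v j) ^ r j) =
            (\<Sum>P\<in>{P. partition_on (v ` {..<k}) P \<and>
                       (\<forall>A\<in>P. even (\<Sum>j\<in>{j. j < k \<and> v j \<in> A}. r j))}.
               expect D \<alpha> \<phi> Q Q' a b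
                 (\<lambda>\<sigma> \<omega>. if cluster_partition D \<alpha> \<phi> \<omega> (v ` {..<k}) = P then 1 else 0) *
               (\<Prod>A\<in>P. moment Q (\<Sum>j\<in>{j. j < k \<and> v j \<in> A}. r j)))"
      by (rule part1[OF ab Q(1) cQ Q(4) vV])
  next
    fix v1 v2 assume "v1 \<in> verts D \<phi>" "v2 \<in> verts D \<phi>" "v1 \<noteq> v2"
    then show "expect D \<alpha> \<phi> Q Q' a b (\<lambda>\<sigma> \<omega>. \<sigma> v1 * \<sigma> v2) =
            moment Q 2 * expect D \<alpha> \<phi> Q Q' a b
                           (\<lambda>\<sigma> \<omega>. if connected_in D \<alpha> \<phi> \<omega> v1 v2 then 1 else 0)"
      using part2[OF ab Q(1) cQ Q(4)] by blast
  qed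
qed

end
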